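(* Let $X$ be a set, $m\ge 1$, and let $\phi_1,\phi_2:X\times X\to\mathbb{C}$ be two functions such that, for $\phi=\phi_1$ and for $\phi=\phi_2$: (i) $\phi(x,y)=-\phi(y,x)$ for all $x,y\in X$; (ii) $\phi(x_1,x_2)\phi(x_3,x_4)-\phi(x_1,x_3)\phi(x_2,x_4)+\phi(x_1,x_4)\phi(x_2,x_3)=0$ for all $x_1,x_2,x_3,x_4\in X$. For $(x_1,\ldots,x_{2m})\in X^{2m}$ with $\phi_2(x_i,x_j)\neq 0$ for all $i\neq j$, define \[ \Delta_{2m}(x_1,\ldots,x_{2m})=\frac{\det_{1\le i\le m,\ m+1\le j\le 2m}\left(\dfrac{\phi_1(x_i,x_j)}{\phi_2(x_i,x_j)}\right)}{\prod_{1\le i<j\le m}\phi_2(x_i,x_j)\ \prod_{m+1\le i<j\le 2m}\phi_2(x_i,x_j)}. \] Then $\Delta_{2m}$ is a symmetric function of all its $2m$ arguments $x_1,\ldots,x_{2m}$ (on this domain).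
   Context: The determinant is of the $m\times m$ matrix with rows indexed by $i=1,\ldots,m$ and columns by $j=m+1,\ldots,2m$. *)

theory Defs
  imports "Jordan_Normal_Form.Determinant" "HOL-Combinatorics.Permutations" Complex_Main
begin

text \<open>Arguments x_1,...,x_{2m} are encoded as a function x :: nat => 'a, using indices 1..2m.
The determinant is of the m x m matrix whose (i,j) entry (1-based i in 1..m, j in m+1..2m)
is phi1(x_i,x_j)/phi2(x_i,x_j); in the 0-based Jordan_Normal_Form matrix, entry (i,j)
corresponds to rows i+1 and columns m+j+1.\<close>

definition Delta :: "('a \<Rightarrow> 'a \<Rightarrow> complex) \<Rightarrow> ('a \<Rightarrow> 'a \<Rightarrow> complex) \<Rightarrow> nat \<Rightarrow> (nat \<Rightarrow> 'a) \<Rightarrow> complex" where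
  "Delta phi1 phi2 m x =
     det (mat m m (\<lambda>(i,j). phi1 (x (i+1)) (x (m+j+1)) / phi2 (x (i+1)) (x (m+j+1))))
     / ((\<Prod>i\<in>{1..m}. \<Prod>j\<in>{i<..m}. phi2 (x i) (x j))
        * (\<Prod>i\<in>{m+1..2*m}. \<Prod>j\<in>{i<..2*m}. phi2 (x i) (x j)))"

definition antisym_fun :: "('a \<Rightarrow> 'a \<Rightarrow> complex) \<Rightarrow> bool" where
  "antisym_fun phi \<longleftrightarrow> (\<forall>x y. phi x y = - phi y x)"

definition pluecker_fun :: "('a \<Rightarrow> 'a \<Rightarrow> complex) \<Rightarrow> bool" where
  "pluecker_fun phi \<longleftrightarrow> (\<forall>x1 x2 x3 x4.
     phi x1 x2 * phi x3 x4 - phi x1 x3 * phi x2 x4 + phi x1 x4 * phi x2 x3 = 0)"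

end

theory Submission
  imports Defs
begin
lemma det_scale_rows:
  assumes A: "A \<in> carrier_mat n n"
  shows "det (mat n n (\<lambda>(i,j). c i * A $$ (i,j))) = prod c {0..<n} * det A"
proof -
  have "det (mat n n (\<lambda>(i,j). c i * A $$ (i,j))) =
    (\<Sum>p\<in>{p. p permutes {0..<n}}. signof p * (prod c {0..<n} * (\<Prod>i=0..<n. A $$ (i, p i))))"
    by (subst det_def'[of _ n]) (auto intro!: sum.cong simp: prod.distrib permutes_in_image[of _ "{0..<n}", simplified])
  also have "\<dots> = prod c {0..<n} * det A"
    by (subst det_def'[OF A]) (simp add: sum_distrib_left algebra_simps)
  finally show ?thesis .
qed

definition vdm :: "nat \<Rightarrow> (nat \<Rightarrow> complex) \<Rightarrow> (nat \<Rightarrow> complex) \<Rightarrow> complex" where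
  "vdm n a b = (\<Prod>i<n. \<Prod>j\<in>{i<..<n}. a i * b j - a j * b i)"

lemma vdm_Suc: "vdm (Suc n) a b = (\<Prod>j\<in>{0<..<Suc n}. a 0 * b j - a j * b 0) * vdm n (a \<circ> Suc) (b \<circ> Suc)"
proof -
  have "vdm (Suc n) a b = (\<Prod>j\<in>{0<..<Suc n}. a 0 * b j - a j * b 0) *
     (\<Prod>i<n. \<Prod>j\<in>{Suc i<..<Suc n}. a (Suc i) * b j - a j * b (Suc i))"
    unfolding vdm_def by (subst prod.lessThan_Suc_shift) simp
  also have "(\<Prod>i<n. \<Prod>j\<in>{Suc i<..<Suc n}. a (Suc i) * b j - a j * b (Suc i)) = vdm n (a \<circ> Suc) (b \<circ> Suc)"
    unfolding vdm_def
  proof (rule prod.cong[OF refl])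
    fix i assume "i \<in> {..<n}"
    have "{Suc i<..<Suc n} = Suc ` {i<..<n}"
      by (auto simp: image_iff) (metis Suc_lessE Suc_less_SucD greaterThanLessThan_iff less_trans_Suc)
    then show "(\<Prod>j\<in>{Suc i<..<Suc n}. a (Suc i) * b j - a j * b (Suc i)) =
         (\<Prod>j\<in>{i<..<n}. (a \<circ> Suc) i * (b \<circ> Suc) j - (a \<circ> Suc) j * (b \<circ> Suc) i)"
      by (simp add: prod.reindex)
  qed
  finally show ?thesis .
qed

lemma sum_two_delta:
  fixes F :: "nat \<Rightarrow> complex"
  assumes "s < N"
  shows "(\<Sum>r<N. F r * (if r = s then X else if Suc r = s then Y else 0)) =
         F s * X + (if s > 0 then F (s - 1) * Y else 0)"
proof -
  have "(\<Sum>r<N. F r * (if r = s then X else if Suc r = s then Y else 0)) =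
        (\<Sum>r<N. (if r = s then F r * X else 0)) + (\<Sum>r<N. (if r = s - 1 \<and> s > 0 then F r * Y else 0))"
    by (subst sum.distrib[symmetric]) (rule sum.cong, auto)
  also have "\<dots> = F s * X + (if s > 0 then F (s - 1) * Y else 0)"
    using assms by (auto simp: sum.delta')
  finally show ?thesis .
qed

lemma vandermonde:
  assumes "\<forall>k<n. a k \<noteq> 0"
  shows "det (mat n n (\<lambda>(k,l). a k ^ (n - 1 - l) * b k ^ l)) = vdm n a b"
  using assms
proof (induction n arbitrary: a b)
  case 0
  then show ?case by (simp add: vdm_def)
next
  case (Suc n)
  define H where "H = mat (Suc n) (Suc n) (\<lambda>(k,l). a k ^ (Suc n - 1 - l) * b k ^ l)"
  define E :: "complex mat" where "E = mat (Suc n) (Suc n) (\<lambda>(r,s). if r = s then (if s = 0 then 1 else a 0) else if Suc r = s then - b 0 else 0)"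
  define A4 where "A4 = mat n n (\<lambda>(k,l). (a 0 * b (Suc k) - a (Suc k) * b 0) * ((a \<circ> Suc) k ^ (n - 1 - l) * (b \<circ> Suc) k ^ l))"
  have H: "H \<in> carrier_mat (Suc n) (Suc n)" and E: "E \<in> carrier_mat (Suc n) (Suc n)"
    unfolding H_def E_def by auto
  have detE: "det E = a 0 ^ n"
  proof -
    have "det E = prod_list (diag_mat E)"
      by (rule det_upper_triangular[OF _ E]) (auto simp: E_def upper_triangular_def)
    also have "\<dots> = (\<Prod>i<Suc n. if i = 0 then 1 else a 0)"
      using E by (subst prod_list_diag_prod) (auto simp: E_def atLeast0LessThan intro!: prod.cong)
    also have "\<dots> = a 0 ^ n" by (subst prod.lessThan_Suc_shift) simp
    finally show ?thesis .
  qed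
  have HE: "H * E = four_block_mat (mat 1 1 (\<lambda>_. a 0 ^ n)) (0\<^sub>m 1 n) (mat n 1 (\<lambda>(k,_). a (Suc k) ^ n)) A4"
  proof (rule eq_matI)
    fix i j assume i: "i < dim_row (four_block_mat (mat 1 1 (\<lambda>_. a 0 ^ n)) (0\<^sub>m 1 n) (mat n 1 (\<lambda>(k,_). a (Suc k) ^ n)) A4)"
      and j: "j < dim_col (four_block_mat (mat 1 1 (\<lambda>_. a 0 ^ n)) (0\<^sub>m 1 n) (mat n 1 (\<lambda>(k,_). a (Suc k) ^ n)) A4)"
    have i': "i < Suc n" and j': "j < Suc n" using i j by (auto simp: A4_def)
    have "(H * E) $$ (i,j) = (\<Sum>r<Suc n. H $$ (i,r) * E $$ (r,j))"
      using i' j' H E by (simp add: scalar_prod_def atLeast0LessThan times_mat_def)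
    also have "\<dots> = (\<Sum>r<Suc n. (a i ^ (n - r) * b i ^ r) * (if r = j then (if j = 0 then 1 else a 0) else if Suc r = j then - b 0 else 0))"
      using i' j' by (intro sum.cong) (auto simp: H_def E_def)
    also have "\<dots> = (a i ^ (n - j) * b i ^ j) * (if j = 0 then 1 else a 0) + (if j > 0 then (a i ^ (n - (j - 1)) * b i ^ (j - 1)) * (- b 0) else 0)"
      by (rule sum_two_delta[OF j'])
    also have "\<dots> = four_block_mat (mat 1 1 (\<lambda>_. a 0 ^ n)) (0\<^sub>m 1 n) (mat n 1 (\<lambda>(k,_). a (Suc k) ^ n)) A4 $$ (i,j)"
    proof (cases "j = 0")
      case True
      then show ?thesis using i' by (cases i) (auto simp: A4_def)
    next
      case False
      then obtain j0 where j0: "j = Suc j0" by (cases j) auto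
      have ex: "n - j0 = Suc (n - Suc j0)" using j' j0 by simp
      show ?thesis
      proof (cases i)
        case 0
        then show ?thesis using j0 j' ex by (simp add: A4_def algebra_simps)
      next
        case (Suc i0)
        then show ?thesis using j0 j' i' ex by (simp add: A4_def algebra_simps)
      qed
    qed
    finally show "(H * E) $$ (i,j) = four_block_mat (mat 1 1 (\<lambda>_. a 0 ^ n)) (0\<^sub>m 1 n) (mat n 1 (\<lambda>(k,_). a (Suc k) ^ n)) A4 $$ (i,j)" .
  qed (auto simp: H_def E_def A4_def)
  have "det H * a 0 ^ n = det (H * E)" using det_mult[OF H E] detE by simp
  also have "\<dots> = a 0 ^ n * det A4"
    unfolding HE by (subst det_four_block_mat_upper_right_zero[of _ 1 _ n]) (auto simp: A4_def det_single)
  also have "det A4 = (\<Prod>k\<in>{0..<n}. a 0 * b (Suc k) - a (Suc k) * b 0) * vdm n (a \<circ> Suc) (b \<circ> Suc)"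
  proof -
    let ?B = "mat n n (\<lambda>(k,l). (a \<circ> Suc) k ^ (n - 1 - l) * (b \<circ> Suc) k ^ l)"
    have "A4 = mat n n (\<lambda>(i,j). (a 0 * b (Suc i) - a (Suc i) * b 0) * ?B $$ (i,j))"
      unfolding A4_def by (rule eq_matI) auto
    then show ?thesis
      using det_scale_rows[of ?B n "\<lambda>k. a 0 * b (Suc k) - a (Suc k) * b 0"]
        Suc.IH[of "a \<circ> Suc" "b \<circ> Suc"] Suc.prems by (simp add: comp_def)
  qed
  also have "(\<Prod>k\<in>{0..<n}. a 0 * b (Suc k) - a (Suc k) * b 0) = (\<Prod>j\<in>{0<..<Suc n}. a 0 * b j - a j * b 0)"
    by (rule prod.reindex_bij_witness[of _ "\<lambda>j. j - 1" Suc]) auto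
  finally have "det H * a 0 ^ n = a 0 ^ n * vdm (Suc n) a b" by (simp add: vdm_Suc comp_def)
  then show ?case using Suc.prems unfolding H_def by simp
qed

lemma prod_lessThan_add: "(\<Prod>i<(m::nat)+n. f i) = (\<Prod>i<m. f i) * (\<Prod>i<n. f (m+i)::complex)"
  by (induct n) (auto simp: ac_simps)

lemma sum_lessThan_add: "(\<Sum>i<(m::nat)+n. f i) = (\<Sum>i<m. f i) + (\<Sum>i<n. f (m+i)::complex)"
  by (induct n) (auto simp: ac_simps)

definition hpoly :: "nat set \<Rightarrow> (nat \<Rightarrow> complex) \<Rightarrow> (nat \<Rightarrow> complex) \<Rightarrow> complex poly" where
  "hpoly S al be = (\<Prod>r\<in>S. [:be r, - al r:])"

lemma hpoly_degree: "finite S \<Longrightarrow> degree (hpoly S al be) \<le> card S"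
proof -
  assume S: "finite S"
  have "degree (hpoly S al be) \<le> sum (degree \<circ> (\<lambda>r. [:be r, - al r:])) S"
    unfolding hpoly_def by (rule degree_prod_sum_le[OF S])
  also have "\<dots> \<le> sum (\<lambda>_. 1) S"
    by (rule sum_mono) (auto simp: degree_pCons_le)
  finally show ?thesis by simp
qed

lemma hpoly_eval:
  assumes S: "finite S" and A: "A \<noteq> 0"
  shows "(\<Prod>r\<in>S. A * be r - al r * B) = (\<Sum>l\<le>card S. coeff (hpoly S al be) l * (A ^ (card S - l) * B ^ l))"
proof -
  let ?Q = "hpoly S al be"
  let ?t = "B / A"
  have "(\<Prod>r\<in>S. A * be r - al r * B) = (\<Prod>r\<in>S. A * (be r - al r * ?t))"
    using A by (intro prod.cong) (auto simp: field_simps)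
  also have "\<dots> = A ^ card S * poly ?Q ?t"
    unfolding hpoly_def poly_prod by (simp add: prod.distrib ac_simps)
  also have "poly ?Q ?t = (\<Sum>l\<le>card S. coeff ?Q l * ?t ^ l)"
  proof -
    have "poly ?Q ?t = (\<Sum>l\<le>degree ?Q. coeff ?Q l * ?t ^ l)" by (rule poly_altdef)
    also have "\<dots> = (\<Sum>l\<le>card S. coeff ?Q l * ?t ^ l)"
      using hpoly_degree[OF S, of al be]
      by (intro sum.mono_neutral_left) (auto simp: coeff_eq_0)
    finally show ?thesis .
  qed
  also have "A ^ card S * (\<Sum>l\<le>card S. coeff ?Q l * ?t ^ l) = (\<Sum>l\<le>card S. coeff ?Q l * (A ^ (card S - l) * B ^ l))"
    unfolding sum_distrib_left
  proof (intro sum.cong refl)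
    fix l assume "l \<in> {..card S}"
    then have "A ^ card S = A ^ (card S - l) * A ^ l" by (simp add: power_add[symmetric])
    then show "A ^ card S * (coeff ?Q l * ?t ^ l) = coeff ?Q l * (A ^ (card S - l) * B ^ l)"
      using A by (simp add: power_divide field_simps)
  qed
  finally show ?thesis .
qed

lemma prod_offdiag:
  fixes g :: "nat \<Rightarrow> nat \<Rightarrow> complex"
  assumes anti: "\<And>i j. g j i = - g i j"
  shows "(\<Prod>j<n. \<Prod>r\<in>{..<n}-{j}. g j r) =
         (-1) ^ card {(i,j). i < j \<and> j < (n::nat)} * (\<Prod>i<n. \<Prod>j\<in>{i<..<n}. g i j)^2"
proof -
  let ?U = "{(i,j). i < j \<and> j < (n::nat)}"
  let ?L = "{(j,r). r < j \<and> j < (n::nat)}"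
  have fU: "finite ?U" by (rule finite_subset[of _ "{..<n} \<times> {..<n}"]) auto
  have fL: "finite ?L" by (rule finite_subset[of _ "{..<n} \<times> {..<n}"]) auto
  have "(\<Prod>j<n. \<Prod>r\<in>{..<n}-{j}. g j r) = prod (\<lambda>(j,r). g j r) (SIGMA j:{..<n}. {..<n}-{j})"
    by (rule prod.Sigma) auto
  also have "(SIGMA j:{..<n}. {..<n}-{j}) = ?U \<union> ?L" by auto
  also have "prod (\<lambda>(j,r). g j r) (?U \<union> ?L) = prod (\<lambda>(j,r). g j r) ?U * prod (\<lambda>(j,r). g j r) ?L"
    by (rule prod.union_disjoint[OF fU fL]) auto
  also have "prod (\<lambda>(j,r). g j r) ?L = prod (\<lambda>(i,j). g j i) ?U"
    by (rule prod.reindex_bij_witness[of _ prod.swap prod.swap]) (auto simp: prod.swap_def)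
  also have "\<dots> = prod (\<lambda>x. (-1) * (case x of (i,j) \<Rightarrow> g i j)) ?U"
    by (intro prod.cong refl) (clarsimp, subst anti, simp)
  also have "\<dots> = (-1) ^ card ?U * prod (\<lambda>(i,j). g i j) ?U"
    by (simp only: prod.distrib prod_constant)
  also have "prod (\<lambda>(i,j). g i j) ?U = (\<Prod>i<n. \<Prod>j\<in>{i<..<n}. g i j)"
  proof -
    have "(\<Prod>i<n. \<Prod>j\<in>{i<..<n}. g i j) = prod (\<lambda>(i,j). g i j) (SIGMA i:{..<n}. {i<..<n})"
      by (rule prod.Sigma) auto
    also have "(SIGMA i:{..<n}. {i<..<n}) = ?U" by auto
    finally show ?thesis by simp
  qed
  finally show ?thesis by (simp add: power2_eq_square ac_simps)
qed

lemma det_zero_row: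
  assumes A: "A \<in> carrier_mat n n" and k: "k < n" and z: "\<forall>j<n. A $$ (k,j) = 0"
  shows "det A = 0"
proof -
  let ?c = "\<lambda>i. if i = k then 0 else (1::'a::comm_ring_1)"
  have "A = mat n n (\<lambda>(i,j). ?c i * A $$ (i,j))"
    using A z by (intro eq_matI) auto
  then have "det A = prod ?c {0..<n} * det A" using det_scale_rows[OF A, of ?c] by metis
  also have "prod ?c {0..<n} = 0" using k by (intro prod_zero) auto
  finally show ?thesis by simp
qed

lemma det_scale_cols:
  assumes A: "A \<in> carrier_mat n n"
  shows "det (mat n n (\<lambda>(i,j). A $$ (i,j) * c j)) = prod c {0..<n} * det A"
proof -
  have "det (mat n n (\<lambda>(i,j). A $$ (i,j) * c j)) = det (transpose_mat (mat n n (\<lambda>(i,j). A $$ (i,j) * c j)))"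
    by (rule det_transpose[symmetric]) auto
  also have "transpose_mat (mat n n (\<lambda>(i,j). A $$ (i,j) * c j)) = mat n n (\<lambda>(i,j). c i * transpose_mat A $$ (i,j))"
    using A by (intro eq_matI) auto
  also have "det \<dots> = prod c {0..<n} * det (transpose_mat A)"
    by (rule det_scale_rows) (use A in auto)
  also have "det (transpose_mat A) = det A" by (rule det_transpose[OF A])
  finally show ?thesis .
qed

lemma det_diag:
  assumes A: "A \<in> carrier_mat n n" and d: "\<forall>i<n. \<forall>j<n. i \<noteq> j \<longrightarrow> A $$ (i,j) = 0"
  shows "det A = (\<Prod>i<n. A $$ (i,i))"
proof -
  have "det A = prod_list (diag_mat A)"
    by (rule det_upper_triangular[OF _ A]) (use A d in \<open>auto simp: upper_triangular_def\<close>)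
  also have "\<dots> = (\<Prod>i<n. A $$ (i,i))"
    using A by (subst prod_list_diag_prod) (auto simp: atLeast0LessThan)
  finally show ?thesis .
qed

definition gg :: "(nat \<Rightarrow> complex) \<Rightarrow> (nat \<Rightarrow> complex) \<Rightarrow> nat \<Rightarrow> nat \<Rightarrow> complex" where
  "gg a b i j = a i * b j - a j * b i"

definition NN :: "nat \<Rightarrow> (nat \<Rightarrow> complex) \<Rightarrow> (nat \<Rightarrow> complex) \<Rightarrow> (nat \<Rightarrow> complex) \<Rightarrow> (nat \<Rightarrow> complex) \<Rightarrow> complex mat" where
  "NN m a b p q = mat (2*m) (2*m) (\<lambda>(k,l). if l < m then p k * (a k ^ (m-1-l) * b k ^ l)
       else q k * (a k ^ (m-1-(l-m)) * b k ^ (l-m)))"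

definition MM :: "nat \<Rightarrow> (nat \<Rightarrow> complex) \<Rightarrow> (nat \<Rightarrow> complex) \<Rightarrow> (nat \<Rightarrow> complex) \<Rightarrow> (nat \<Rightarrow> complex) \<Rightarrow> complex mat" where
  "MM m a b p q = mat m m (\<lambda>(i,j). gg p q i (m+j) / gg a b i (m+j))"

lemma core_degenerate:
  assumes j0: "j0 < m" and z: "p (m+j0) = 0" "q (m+j0) = 0"
  shows "det (MM m a b p q) = 0" "det (NN m a b p q) = 0"
proof -
  have "det (MM m a b p q) = det (transpose_mat (MM m a b p q))"
    by (rule det_transpose[symmetric]) (auto simp: MM_def)
  also have "\<dots> = 0"
    by (rule det_zero_row[of _ m j0]) (use j0 z in \<open>auto simp: MM_def gg_def\<close>)
  finally show "det (MM m a b p q) = 0" .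
  show "det (NN m a b p q) = 0"
    by (rule det_zero_row[of _ "2*m" "m+j0"]) (use j0 z in \<open>auto simp: NN_def\<close>)
qed

lemma core_main:
  assumes m1: "m \<ge> 1"
    and gnz: "\<forall>i<2*m. \<forall>j<2*m. i \<noteq> j \<longrightarrow> gg a b i j \<noteq> 0"
    and anz: "\<forall>k<2*m. a k \<noteq> 0"
    and qnz: "\<forall>j<m. q (m+j) \<noteq> 0"
  shows "det (MM m a b p q) * (\<Prod>k<m. \<Prod>r<m. gg a b k (m+r)) =
         (-1) ^ card {(i,j). i < j \<and> j < m} * det (NN m a b p q)"
proof -
  define S where "S j = {..<m} - {j}" for j :: nat
  define P where "P j k = (\<Prod>r\<in>S j. gg a b k (m+r))" for j k
  define Pm where "Pm = mat m m (\<lambda>(l,j). coeff (hpoly (S j) (\<lambda>r. a (m+r)) (\<lambda>r. b (m+r))) l)"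
  have cardS: "j < m \<Longrightarrow> card (S j) = m - 1" for j unfolding S_def by auto
  have K: "(\<Sum>l<m. (a k ^ (m-1-l) * b k ^ l) * Pm $$ (l,j)) = P j k" if k: "k < 2*m" and j: "j < m" for k j
  proof -
    have "P j k = (\<Prod>r\<in>S j. a k * b (m+r) - a (m+r) * b k)"
      unfolding P_def gg_def ..
    also have "\<dots> = (\<Sum>l\<le>card (S j). coeff (hpoly (S j) (\<lambda>r. a (m+r)) (\<lambda>r. b (m+r))) l * (a k ^ (card (S j) - l) * b k ^ l))"
      by (rule hpoly_eval) (use anz k in \<open>auto simp: S_def\<close>)
    also have "{..card (S j)} = {..<m}" using cardS[OF j] m1 by auto
    also have "(\<Sum>l<m. coeff (hpoly (S j) (\<lambda>r. a (m+r)) (\<lambda>r. b (m+r))) l * (a k ^ (card (S j) - l) * b k ^ l))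
             = (\<Sum>l<m. (a k ^ (m-1-l) * b k ^ l) * Pm $$ (l,j))"
      using cardS[OF j] j by (intro sum.cong refl) (auto simp: Pm_def)
    finally show ?thesis by simp
  qed
  have Pzero: "P j (m+r) = 0" if "j < m" "r < m" "r \<noteq> j" for j r
    unfolding P_def by (rule prod_zero) (use that in \<open>auto simp: S_def gg_def intro!: bexI[of _ r]\<close>)
  define G where "G k = (\<Prod>r<m. gg a b k (m+r))" for k
  have GP: "G k = gg a b k (m+j) * P j k" if "j < m" for j k
    unfolding G_def P_def S_def using that by (subst prod.remove[of _ j]) auto
  define T where "T = mat (2*m) (2*m) (\<lambda>(r,s). if r < m then (if s < m then Pm $$ (r,s) * q (m+s) else 0)
      else (if s < m then - (Pm $$ (r-m,s) * p (m+s)) else Pm $$ (r-m,s-m)))"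
  define R11 where "R11 = mat m m (\<lambda>(k,s). gg p q k (m+s) * P s k)"
  define R12 where "R12 = mat m m (\<lambda>(k,s). q k * P s k)"
  define D where "D = mat m m (\<lambda>(r,s). q (m+r) * P s (m+r))"
  have NT: "NN m a b p q * T = four_block_mat R11 R12 (0\<^sub>m m m) D"
  proof (rule eq_matI)
    fix k s assume k: "k < dim_row (four_block_mat R11 R12 (0\<^sub>m m m) D)" and s: "s < dim_col (four_block_mat R11 R12 (0\<^sub>m m m) D)"
    have k': "k < 2*m" and s': "s < 2*m" using k s by (auto simp: R11_def D_def)
    have "(NN m a b p q * T) $$ (k,s) = (\<Sum>r<m+m. NN m a b p q $$ (k,r) * T $$ (r,s))"
      using k' s' by (simp add: scalar_prod_def atLeast0LessThan times_mat_def NN_def T_def mult_2)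
    also have "\<dots> = (\<Sum>r<m. NN m a b p q $$ (k,r) * T $$ (r,s)) + (\<Sum>r<m. NN m a b p q $$ (k,m+r) * T $$ (m+r,s))"
      by (rule sum_lessThan_add)
    also have "\<dots> = (if s < m then gg p q k (m+s) * P s k else q k * P (s-m) k)"
    proof (cases "s < m")
      case True
      have "(\<Sum>r<m. NN m a b p q $$ (k,r) * T $$ (r,s)) = p k * q (m+s) * (\<Sum>l<m. (a k ^ (m-1-l) * b k ^ l) * Pm $$ (l,s))"
        using k' s' True by (simp add: sum_distrib_left NN_def T_def ac_simps)
      moreover have "(\<Sum>r<m. NN m a b p q $$ (k,m+r) * T $$ (m+r,s)) = - (q k * p (m+s) * (\<Sum>l<m. (a k ^ (m-1-l) * b k ^ l) * Pm $$ (l,s)))"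
        using k' s' True by (simp add: sum_distrib_left NN_def T_def ac_simps sum_negf[symmetric])
      ultimately show ?thesis using K[OF k' True] True by (simp add: gg_def algebra_simps)
    next
      case False
      then obtain s0 where s0: "s = m + s0" "s0 < m" using s' by (metis add_diff_inverse_nat mult_2 nat_add_left_cancel_less)
      have "(\<Sum>r<m. NN m a b p q $$ (k,r) * T $$ (r,s)) = 0"
        using k' s' False by (simp add: T_def)
      moreover have "(\<Sum>r<m. NN m a b p q $$ (k,m+r) * T $$ (m+r,s)) = q k * (\<Sum>l<m. (a k ^ (m-1-l) * b k ^ l) * Pm $$ (l,s0))"
        using k' s' s0 by (simp add: sum_distrib_left NN_def T_def ac_simps)
      ultimately show ?thesis using K[OF k' s0(2)] s0 by simp
    qed
    also have "\<dots> = four_block_mat R11 R12 (0\<^sub>m m m) D $$ (k,s)"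
    proof -
      have "k \<ge> m \<Longrightarrow> s < m \<Longrightarrow> gg p q k (m+s) * P s k = 0"
      proof -
        assume km: "k \<ge> m" and sm: "s < m"
        obtain k0 where k0: "k = m + k0" "k0 < m" using k' km by (metis add_diff_inverse_nat mult_2 nat_add_left_cancel_less not_less)
        show ?thesis
        proof (cases "k0 = s")
          case True then show ?thesis using k0 by (simp add: gg_def)
        next
          case False then show ?thesis using k0 Pzero[OF sm k0(2)] by simp
        qed
      qed
      then show ?thesis using k' s' by (auto simp: R11_def R12_def D_def mult_2)
    qed
    finally show "(NN m a b p q * T) $$ (k,s) = four_block_mat R11 R12 (0\<^sub>m m m) D $$ (k,s)" .
  qed (auto simp: NN_def T_def R11_def D_def mult_2)
  have NNc: "NN m a b p q \<in> carrier_mat (2*m) (2*m)" by (simp add: NN_def)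
  have Tc: "T \<in> carrier_mat (2*m) (2*m)" by (simp add: T_def)
  have Pmc: "Pm \<in> carrier_mat m m" by (simp add: Pm_def)
  have detR: "det (four_block_mat R11 R12 (0\<^sub>m m m) D) = det R11 * det D"
    by (rule det_four_block_mat_lower_left_zero) (auto simp: R11_def R12_def D_def)
  have detD: "det D = (\<Prod>r<m. q (m+r) * P r (m+r))"
    by (subst det_diag[of _ m]) (auto simp: D_def Pzero)
  have detR11: "det R11 = (\<Prod>k<m. G k) * det (MM m a b p q)"
  proof -
    have "R11 = mat m m (\<lambda>(i,j). G i * MM m a b p q $$ (i,j))"
    proof (rule eq_matI)
      fix i j assume "i < dim_row (mat m m (\<lambda>(i,j). G i * MM m a b p q $$ (i,j)))"
        "j < dim_col (mat m m (\<lambda>(i,j). G i * MM m a b p q $$ (i,j)))"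
      then have i: "i < m" and j: "j < m" by auto
      have "gg a b i (m+j) \<noteq> 0" using gnz i j by auto
      then show "R11 $$ (i,j) = mat m m (\<lambda>(i,j). G i * MM m a b p q $$ (i,j)) $$ (i,j)"
        using i j GP[OF j, of i] by (simp add: R11_def MM_def)
    qed (auto simp: R11_def)
    then show ?thesis
      using det_scale_rows[of "MM m a b p q" m G] by (simp add: MM_def atLeast0LessThan)
  qed
  define T11 where "T11 = mat m m (\<lambda>(r,s). Pm $$ (r,s) * q (m+s))"
  have Tblock: "T = four_block_mat T11 (0\<^sub>m m m) (mat m m (\<lambda>(r,s). - (Pm $$ (r,s) * p (m+s)))) Pm"
    by (rule eq_matI) (auto simp: T_def T11_def Pm_def mult_2)
  have detT: "det T = (\<Prod>s<m. q (m+s)) * det Pm * det Pm"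
  proof -
    have "det T = det T11 * det Pm"
      unfolding Tblock by (rule det_four_block_mat_upper_right_zero) (auto simp: T11_def Pm_def)
    moreover have "det T11 = (\<Prod>s<m. q (m+s)) * det Pm"
      unfolding T11_def using det_scale_cols[OF Pmc, of "\<lambda>s. q (m+s)"] by (simp add: atLeast0LessThan)
    ultimately show ?thesis by simp
  qed
  define HB where "HB = mat m m (\<lambda>(k,l). (\<lambda>k. a (m+k)) k ^ (m - 1 - l) * (\<lambda>k. b (m+k)) k ^ l)"
  have HBc: "HB \<in> carrier_mat m m" by (simp add: HB_def)
  have detHB: "det HB = vdm m (\<lambda>k. a (m+k)) (\<lambda>k. b (m+k))"
    unfolding HB_def by (rule vandermonde) (use anz in auto)
  have HBPm: "det HB * det Pm = (\<Prod>j<m. P j (m+j))"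
  proof -
    have "HB * Pm = mat m m (\<lambda>(r,j). P j (m+r))"
    proof (rule eq_matI)
      fix r j assume "r < dim_row (mat m m (\<lambda>(r,j). P j (m+r)))" "j < dim_col (mat m m (\<lambda>(r,j). P j (m+r)))"
      then have r: "r < m" and j: "j < m" by auto
      have "(HB * Pm) $$ (r,j) = (\<Sum>l<m. (a (m+r) ^ (m-1-l) * b (m+r) ^ l) * Pm $$ (l,j))"
        using r j by (simp add: HB_def Pm_def times_mat_def scalar_prod_def atLeast0LessThan)
      also have "\<dots> = P j (m+r)" by (rule K) (use r j in auto)
      finally show "(HB * Pm) $$ (r,j) = mat m m (\<lambda>(r,j). P j (m+r)) $$ (r,j)" using r j by simp
    qed (auto simp: HB_def Pm_def)
    then have "det HB * det Pm = det (mat m m (\<lambda>(r,j). P j (m+r)))"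
      using det_mult[OF HBc Pmc] by simp
    also have "\<dots> = (\<Prod>j<m. P j (m+j))"
      by (subst det_diag[of _ m]) (auto simp: Pzero)
    finally show ?thesis .
  qed
  define VB where "VB = vdm m (\<lambda>k. a (m+k)) (\<lambda>k. b (m+k))"
  define c where "c = card {(i,j). i < j \<and> j < m}"
  have Pi: "(\<Prod>j<m. P j (m+j)) = (-1) ^ c * VB ^ 2"
  proof -
    have "(\<Prod>j<m. P j (m+j)) = (\<Prod>j<m. \<Prod>r\<in>{..<m}-{j}. gg a b (m+j) (m+r))"
      unfolding P_def S_def ..
    also have "\<dots> = (-1) ^ c * (\<Prod>i<m. \<Prod>j\<in>{i<..<m}. gg a b (m+i) (m+j)) ^ 2"
      unfolding c_def by (rule prod_offdiag) (simp add: gg_def)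
    finally show ?thesis by (simp add: VB_def vdm_def gg_def)
  qed
  have VBnz: "VB \<noteq> 0"
    unfolding VB_def vdm_def using gnz by (auto simp: gg_def mult_2)
  have qnz': "(\<Prod>s<m. q (m+s)) \<noteq> 0" using qnz by auto
  have s2: "((-1::complex) ^ c) ^ 2 = 1" by (simp add: power_mult[symmetric] power_mult_distrib)
  have main: "det (NN m a b p q) * ((\<Prod>s<m. q (m+s)) * det Pm * det Pm) =
      (\<Prod>k<m. G k) * det (MM m a b p q) * (\<Prod>r<m. q (m+r) * P r (m+r))"
    using det_mult[OF NNc Tc] NT detR detD detR11 detT by simp
  have detPm: "det Pm = (-1) ^ c * VB" using HBPm Pi detHB VBnz unfolding VB_def[symmetric]
    by (simp add: power2_eq_square field_simps)
  have "det (NN m a b p q) * (\<Prod>s<m. q (m+s)) * VB ^ 2 =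
      (\<Prod>k<m. G k) * det (MM m a b p q) * (\<Prod>s<m. q (m+s)) * ((-1) ^ c * VB ^ 2)"
    using main detPm Pi s2 by (simp add: prod.distrib power2_eq_square ac_simps)
  then have "det (NN m a b p q) = (\<Prod>k<m. G k) * det (MM m a b p q) * (-1) ^ c"
    using qnz' VBnz by (simp add: field_simps)
  then show ?thesis unfolding c_def[symmetric] G_def using s2
    by (simp add: algebra_simps power2_eq_square)
qed

lemma core:
  assumes m1: "m \<ge> 1"
    and gnz: "\<forall>i<2*m. \<forall>j<2*m. i \<noteq> j \<longrightarrow> gg a b i j \<noteq> 0"
    and anz: "\<forall>k<2*m. a k \<noteq> 0"
    and qnz: "\<forall>j<m. q (m+j) \<noteq> 0 \<or> (p (m+j) = 0 \<and> q (m+j) = 0)"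
  shows "det (MM m a b p q) * (\<Prod>k<m. \<Prod>r<m. gg a b k (m+r)) =
         (-1) ^ card {(i,j). i < j \<and> j < m} * det (NN m a b p q)"
proof (cases "\<exists>j<m. p (m+j) = 0 \<and> q (m+j) = 0")
  case True
  then obtain j0 where "j0 < m" "p (m+j0) = 0" "q (m+j0) = 0" by auto
  then show ?thesis using core_degenerate[of j0 m p q a b] by simp
next
  case False
  then have "\<forall>j<m. q (m+j) \<noteq> 0" using qnz by blast
  then show ?thesis by (rule core_main[OF m1 gnz anz])
qed

lemma vdm_split:
  "vdm (m+m) a b = vdm m a b * vdm m (\<lambda>k. a (m+k)) (\<lambda>k. b (m+k)) * (\<Prod>k<m. \<Prod>r<m. gg a b k (m+r))"
proof -
  have "vdm (m+m) a b = (\<Prod>i<m. \<Prod>j\<in>{i<..<m+m}. a i * b j - a j * b i) *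
      (\<Prod>i<m. \<Prod>j\<in>{m+i<..<m+m}. a (m+i) * b j - a j * b (m+i))"
    unfolding vdm_def by (rule prod_lessThan_add)
  also have "(\<Prod>i<m. \<Prod>j\<in>{i<..<m+m}. a i * b j - a j * b i) =
      (\<Prod>i<m. (\<Prod>j\<in>{i<..<m}. a i * b j - a j * b i) * (\<Prod>r<m. gg a b i (m+r)))"
  proof (rule prod.cong[OF refl])
    fix i assume i: "i \<in> {..<m}"
    have "{i<..<m+m} = {i<..<m} \<union> {m..<m+m}" using i by auto
    then have "(\<Prod>j\<in>{i<..<m+m}. a i * b j - a j * b i) =
       (\<Prod>j\<in>{i<..<m}. a i * b j - a j * b i) * (\<Prod>j\<in>{m..<m+m}. a i * b j - a j * b i)"
      by (simp add: prod.union_disjoint ivl_disj_int)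
    also have "(\<Prod>j\<in>{m..<m+m}. a i * b j - a j * b i) = (\<Prod>r<m. gg a b i (m+r))"
      unfolding gg_def by (rule prod.reindex_bij_witness[of _ "\<lambda>r. m+r" "\<lambda>j. j - m"]) auto
    finally show "(\<Prod>j\<in>{i<..<m+m}. a i * b j - a j * b i) =
      (\<Prod>j\<in>{i<..<m}. a i * b j - a j * b i) * (\<Prod>r<m. gg a b i (m+r))" .
  qed
  also have "(\<Prod>i<m. \<Prod>j\<in>{m+i<..<m+m}. a (m+i) * b j - a j * b (m+i)) = vdm m (\<lambda>k. a (m+k)) (\<lambda>k. b (m+k))"
    unfolding vdm_def
  proof (rule prod.cong[OF refl])
    fix i assume "i \<in> {..<m}"
    show "(\<Prod>j\<in>{m+i<..<m+m}. a (m+i) * b j - a j * b (m+i)) =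
        (\<Prod>j\<in>{i<..<m}. a (m+i) * b (m+j) - a (m+j) * b (m+i))"
      by (rule prod.reindex_bij_witness[of _ "\<lambda>r. m+r" "\<lambda>j. j - m"]) auto
  qed
  finally show ?thesis unfolding vdm_def by (simp add: prod.distrib)
qed

lemma rep_exists:
  assumes "antisym_fun phi" "pluecker_fun phi"
  shows "\<exists>A B. \<forall>x y. phi x y = A x * B y - A y * B x"
proof (cases "\<exists>u v. phi u v \<noteq> 0")
  case True
  then obtain u v where uv: "phi u v \<noteq> 0" by auto
  have "phi x y = phi u x / phi u v * phi v y - phi u y / phi u v * phi v x" for x y
  proof -
    have "phi u v * phi x y - phi u x * phi v y + phi u y * phi v x = 0"
      using assms(2) unfolding pluecker_fun_def by blast
    then show ?thesis using uv by (simp add: field_simps)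
  qed
  note H = this
  show ?thesis by (rule exI[of _ "\<lambda>x. phi u x / phi u v"], rule exI[of _ "\<lambda>y. phi v y"], intro allI, rule H)
next
  case False
  then show ?thesis by (rule_tac x="\<lambda>_. 0" in exI) auto
qed

lemma lambda_exists:
  fixes u v :: "nat \<Rightarrow> complex"
  assumes "finite K"
  shows "\<exists>l. \<forall>k\<in>K. (u k \<noteq> 0 \<or> v k \<noteq> 0) \<longrightarrow> u k + l * v k \<noteq> 0"
proof -
  have "finite ((\<lambda>k. - u k / v k) ` K)" using assms by simp
  then obtain l where l: "l \<notin> (\<lambda>k. - u k / v k) ` K"
    using ex_new_if_finite[OF infinite_UNIV_char_0] by blast
  show ?thesis
  proof (rule exI[of _ l], intro ballI impI)
    fix k assume k: "k \<in> K" and nz: "u k \<noteq> 0 \<or> v k \<noteq> 0"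
    show "u k + l * v k \<noteq> 0"
    proof
      assume eq: "u k + l * v k = 0"
      show False
      proof (cases "v k = 0")
        case True then show False using eq nz by simp
      next
        case False
        have "l * v k = - u k" using eq by (simp add: add_eq_0_iff ac_simps)
        then have "l = - u k / v k" using False by (auto simp: field_simps)
        then show False using l k by auto
      qed
    qed
  qed
qed

lemma Delta_formula:
  fixes z :: "nat \<Rightarrow> 'a" and phi1 phi2 :: "'a \<Rightarrow> 'a \<Rightarrow> complex"
  assumes m1: "m \<ge> 1"
   and r1: "\<forall>u v. phi1 u v = P u * Q v - P v * Q u"
   and r2: "\<forall>u v. phi2 u v = A u * B v - A v * B u"
   and nz: "\<forall>i\<in>{1..2*m}. \<forall>j\<in>{1..2*m}. i \<noteq> j \<longrightarrow> phi2 (z i) (z j) \<noteq> 0"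
   and anz: "\<forall>k\<in>{1..2*m}. A (z k) \<noteq> 0"
   and qnz: "\<forall>k\<in>{1..2*m}. Q (z k) \<noteq> 0 \<or> (P (z k) = 0 \<and> Q (z k) = 0)"
  shows "Delta phi1 phi2 m z = (-1) ^ card {(i,j). i < j \<and> j < m} *
     det (NN m (\<lambda>k. A (z (Suc k))) (\<lambda>k. B (z (Suc k))) (\<lambda>k. P (z (Suc k))) (\<lambda>k. Q (z (Suc k)))) /
     det (mat (2*m) (2*m) (\<lambda>(k,l). A (z (Suc k)) ^ (2*m-1-l) * B (z (Suc k)) ^ l))"
proof -
  define a where "a k = A (z (Suc k))" for k
  define b where "b k = B (z (Suc k))" for k
  define p where "p k = P (z (Suc k))" for k
  define q where "q k = Q (z (Suc k))" for k
  have gphi: "gg a b i j = phi2 (z (Suc i)) (z (Suc j))" for i j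
    using r2 by (simp add: gg_def a_def b_def)
  have gnz: "\<forall>i<2*m. \<forall>j<2*m. i \<noteq> j \<longrightarrow> gg a b i j \<noteq> 0"
    using nz unfolding gphi by auto
  have anz': "\<forall>k<2*m. a k \<noteq> 0" using anz by (auto simp: a_def)
  have qnz': "\<forall>j<m. q (m+j) \<noteq> 0 \<or> (p (m+j) = 0 \<and> q (m+j) = 0)"
    using qnz by (auto simp: p_def q_def)
  define s where "s = ((-1::complex) ^ card {(i,j). i < j \<and> j < m})"
  have C: "det (MM m a b p q) * (\<Prod>k<m. \<Prod>r<m. gg a b k (m+r)) = s * det (NN m a b p q)"
    unfolding s_def by (rule core[OF m1 gnz anz' qnz'])
  have Meq: "mat m m (\<lambda>(i,j). phi1 (z (i+1)) (z (m+j+1)) / phi2 (z (i+1)) (z (m+j+1))) = MM m a b p q"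
    by (rule eq_matI) (auto simp: MM_def gg_def r1 r2 a_def b_def p_def q_def)
  have in1: "(\<Prod>j\<in>{Suc i<..m}. F j) = (\<Prod>j\<in>{i<..<m}. F (Suc j))" for i and F :: "nat \<Rightarrow> complex"
    by (rule prod.reindex_bij_witness[of _ Suc "\<lambda>i. i - 1"]) auto
  have out1: "(\<Prod>i\<in>{1..m}. F i) = (\<Prod>i<m. F (Suc i))" for F :: "nat \<Rightarrow> complex"
    by (rule prod.reindex_bij_witness[of _ Suc "\<lambda>i. i - 1"]) auto
  have in2: "(\<Prod>j\<in>{m+1+i<..2*m}. F j) = (\<Prod>j\<in>{i<..<m}. F (m+1+j))" for i and F :: "nat \<Rightarrow> complex"
    by (rule prod.reindex_bij_witness[of _ "\<lambda>j. m+1+j" "\<lambda>j. j - (m+1)"]) auto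
  have out2: "(\<Prod>i\<in>{m+1..2*m}. F i) = (\<Prod>i<m. F (m+1+i))" for F :: "nat \<Rightarrow> complex"
    by (rule prod.reindex_bij_witness[of _ "\<lambda>j. m+1+j" "\<lambda>j. j - (m+1)"]) auto
  have den1: "(\<Prod>i\<in>{1..m}. \<Prod>j\<in>{i<..m}. phi2 (z i) (z j)) = vdm m a b"
    unfolding out1 in1 vdm_def by (simp add: r2 a_def b_def)
  have den2: "(\<Prod>i\<in>{m+1..2*m}. \<Prod>j\<in>{i<..2*m}. phi2 (z i) (z j)) = vdm m (\<lambda>k. a (m+k)) (\<lambda>k. b (m+k))"
    unfolding out2 in2 vdm_def by (simp add: r2 a_def b_def)
  have V2: "det (mat (2*m) (2*m) (\<lambda>(k,l). a k ^ (2*m-1-l) * b k ^ l)) =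
      vdm m a b * vdm m (\<lambda>k. a (m+k)) (\<lambda>k. b (m+k)) * (\<Prod>k<m. \<Prod>r<m. gg a b k (m+r))"
    using vandermonde[of "2*m" a b] anz' vdm_split[of m a b] by (simp add: mult_2)
  have VAnz: "vdm m a b \<noteq> 0" unfolding vdm_def using gnz by (auto simp: gg_def)
  have VBnz: "vdm m (\<lambda>k. a (m+k)) (\<lambda>k. b (m+k)) \<noteq> 0" unfolding vdm_def using gnz by (auto simp: gg_def)
  have Gnz: "(\<Prod>k<m. \<Prod>r<m. gg a b k (m+r)) \<noteq> 0" using gnz by auto
  have "Delta phi1 phi2 m z = det (MM m a b p q) / (vdm m a b * vdm m (\<lambda>k. a (m+k)) (\<lambda>k. b (m+k)))"
    unfolding Delta_def Meq den1 den2 ..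
  also have "\<dots> = s * det (NN m a b p q) / det (mat (2*m) (2*m) (\<lambda>(k,l). a k ^ (2*m-1-l) * b k ^ l))"
    unfolding V2 C[symmetric] using Gnz by simp
  finally show ?thesis unfolding s_def a_def b_def p_def q_def .
qed

lemma perm_shift:
  assumes sig: "\<sigma> permutes {1..n}"
  defines "\<pi> \<equiv> (\<lambda>k. if k < n then \<sigma> (Suc k) - 1 else k)"
  shows "\<pi> permutes {0..<n}" and "\<And>k. k < n \<Longrightarrow> Suc (\<pi> k) = \<sigma> (Suc k)"
proof -
  have img: "\<sigma> (Suc k) \<in> {1..n}" if "k < n" for k
    using permutes_in_image[OF sig] that by auto
  show sh: "\<And>k. k < n \<Longrightarrow> Suc (\<pi> k) = \<sigma> (Suc k)"
    using img unfolding \<pi>_def by fastforce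
  have inj: "inj_on \<pi> {0..<n}"
  proof (rule inj_onI)
    fix i j assume i: "i \<in> {0..<n}" and j: "j \<in> {0..<n}" and e: "\<pi> i = \<pi> j"
    then have "\<sigma> (Suc i) = \<sigma> (Suc j)" using sh[of i] sh[of j] by auto
    then show "i = j" using injD[OF permutes_inj[OF sig]] by auto
  qed
  have sub: "\<pi> ` {0..<n} \<subseteq> {0..<n}" using img unfolding \<pi>_def by fastforce
  have "\<pi> ` {0..<n} = {0..<n}" by (rule endo_inj_surj[OF _ sub inj]) simp
  then have "bij_betw \<pi> {0..<n} {0..<n}" using inj by (simp add: bij_betw_def)
  then show "\<pi> permutes {0..<n}" by (rule bij_imp_permutes) (auto simp: \<pi>_def)
qed

theorem mainTheorem1:
  fixes phi1 phi2 :: "'a \<Rightarrow> 'a \<Rightarrow> complex" and m :: nat and x :: "nat \<Rightarrow> 'a"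
    and \<sigma> :: "nat \<Rightarrow> nat"
  assumes "m \<ge> 1"
    and "antisym_fun phi1" and "pluecker_fun phi1"
    and "antisym_fun phi2" and "pluecker_fun phi2"
    and "\<forall>i\<in>{1..2*m}. \<forall>j\<in>{1..2*m}. i \<noteq> j \<longrightarrow> phi2 (x i) (x j) \<noteq> 0"
    and "\<sigma> permutes {1..2*m}"
  shows "Delta phi1 phi2 m (x \<circ> \<sigma>) = Delta phi1 phi2 m x"
proof -
  note m1 = assms(1) and nz = assms(6) and sig = assms(7)
  obtain A0 B0 where rA: "\<forall>u v. phi2 u v = A0 u * B0 v - A0 v * B0 u"
    using rep_exists[OF assms(4,5)] by blast
  obtain l where l: "\<forall>k\<in>{1..2*m}. (A0 (x k) \<noteq> 0 \<or> B0 (x k) \<noteq> 0) \<longrightarrow> A0 (x k) + l * B0 (x k) \<noteq> 0"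
    using lambda_exists[of "{1..2*m}" "\<lambda>k. A0 (x k)" "\<lambda>k. B0 (x k)"] by auto
  define A where "A u = A0 u + l * B0 u" for u
  have r2: "\<forall>u v. phi2 u v = A u * B0 v - A v * B0 u"
    using rA by (simp add: A_def algebra_simps)
  have anz: "\<forall>k\<in>{1..2*m}. A (x k) \<noteq> 0"
  proof
    fix k assume k: "k \<in> {1..2*m}"
    define j :: nat where "j = (if k = 1 then 2 else 1)"
    have j: "j \<in> {1..2*m}" "j \<noteq> k" using m1 k by (auto simp: j_def)
    have "phi2 (x k) (x j) \<noteq> 0" using nz k j by auto
    then have "A0 (x k) \<noteq> 0 \<or> B0 (x k) \<noteq> 0" using rA by auto
    then show "A (x k) \<noteq> 0" using l k by (simp add: A_def)
  qed
  obtain P Q0 where rP: "\<forall>u v. phi1 u v = P u * Q0 v - P v * Q0 u"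
    using rep_exists[OF assms(2,3)] by blast
  obtain l' where l': "\<forall>k\<in>{1..2*m}. (Q0 (x k) \<noteq> 0 \<or> P (x k) \<noteq> 0) \<longrightarrow> Q0 (x k) + l' * P (x k) \<noteq> 0"
    using lambda_exists[of "{1..2*m}" "\<lambda>k. Q0 (x k)" "\<lambda>k. P (x k)"] by auto
  define Q where "Q u = Q0 u + l' * P u" for u
  have r1: "\<forall>u v. phi1 u v = P u * Q v - P v * Q u"
    using rP by (simp add: Q_def algebra_simps)
  have qnz: "\<forall>k\<in>{1..2*m}. Q (x k) \<noteq> 0 \<or> (P (x k) = 0 \<and> Q (x k) = 0)"
    using l' by (auto simp: Q_def)
  define y where "y = x \<circ> \<sigma>"
  have inS: "\<sigma> k \<in> {1..2*m}" if "k \<in> {1..2*m}" for k using permutes_in_image[OF sig] that by auto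
  have nzy: "\<forall>i\<in>{1..2*m}. \<forall>j\<in>{1..2*m}. i \<noteq> j \<longrightarrow> phi2 (y i) (y j) \<noteq> 0"
  proof (intro ballI impI)
    fix i j assume i: "i \<in> {1..2*m}" and j: "j \<in> {1..2*m}" and ij: "i \<noteq> j"
    have "\<sigma> i \<noteq> \<sigma> j" using ij injD[OF permutes_inj[OF sig]] by auto
    then show "phi2 (y i) (y j) \<noteq> 0" using nz inS[OF i] inS[OF j] by (simp add: y_def)
  qed
  have anzy: "\<forall>k\<in>{1..2*m}. A (y k) \<noteq> 0" using anz inS by (simp add: y_def)
  have qnzy: "\<forall>k\<in>{1..2*m}. Q (y k) \<noteq> 0 \<or> (P (y k) = 0 \<and> Q (y k) = 0)" using qnz inS by (simp add: y_def)
  define \<pi> where "\<pi> = (\<lambda>k. if k < 2*m then \<sigma> (Suc k) - 1 else k)"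
  have pi: "\<pi> permutes {0..<2*m}" and sh: "\<And>k. k < 2*m \<Longrightarrow> Suc (\<pi> k) = \<sigma> (Suc k)"
    using perm_shift[OF sig] unfolding \<pi>_def by auto
  have yx: "y (Suc k) = x (Suc (\<pi> k))" if "k < 2*m" for k using sh[OF that] by (simp add: y_def)
  have pil: "\<pi> k < 2*m" if "k < 2*m" for k using permutes_in_image[OF pi] that by auto
  define Nx where "Nx = NN m (\<lambda>k. A (x (Suc k))) (\<lambda>k. B0 (x (Suc k))) (\<lambda>k. P (x (Suc k))) (\<lambda>k. Q (x (Suc k)))"
  define Ny where "Ny = NN m (\<lambda>k. A (y (Suc k))) (\<lambda>k. B0 (y (Suc k))) (\<lambda>k. P (y (Suc k))) (\<lambda>k. Q (y (Suc k)))"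
  define Hx where "Hx = mat (2*m) (2*m) (\<lambda>(k,l). A (x (Suc k)) ^ (2*m-1-l) * B0 (x (Suc k)) ^ l)"
  define Hy where "Hy = mat (2*m) (2*m) (\<lambda>(k,l). A (y (Suc k)) ^ (2*m-1-l) * B0 (y (Suc k)) ^ l)"
  have Nyx: "Ny = mat (2*m) (2*m) (\<lambda>(i,j). Nx $$ (\<pi> i, j))"
    by (rule eq_matI) (auto simp: Nx_def Ny_def NN_def yx pil)
  have Hyx: "Hy = mat (2*m) (2*m) (\<lambda>(i,j). Hx $$ (\<pi> i, j))"
    by (rule eq_matI) (auto simp: Hx_def Hy_def yx pil)
  have dN: "det Ny = signof \<pi> * det Nx"
    unfolding Nyx by (rule det_permute_rows[OF _ pi]) (simp add: Nx_def NN_def)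
  have dH: "det Hy = signof \<pi> * det Hx"
    unfolding Hyx by (rule det_permute_rows[OF _ pi]) (simp add: Hx_def)
  have sgnz: "(signof \<pi> :: complex) \<noteq> 0" by (simp add: sign_def)
  have "Delta phi1 phi2 m y = (-1) ^ card {(i,j). i < j \<and> j < m} * det Ny / det Hy"
    unfolding Ny_def Hy_def by (rule Delta_formula[OF m1 r1 r2 nzy anzy qnzy])
  also have "\<dots> = (-1) ^ card {(i,j). i < j \<and> j < m} * det Nx / det Hx"
    unfolding dN dH using sgnz by simp
  also have "\<dots> = Delta phi1 phi2 m x"
    unfolding Nx_def Hx_def by (rule Delta_formula[OF m1 r1 r2 nz anz qnz, symmetric])
  finally show ?thesis unfolding y_def .
qed
end
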